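(* A Hausdorff space $(X,\mathcal T)$ is very I-favorable if and only if the family $\{\mathcal P\in[\mathcal T]^{\le\omega}:\mathcal P\subset_!\mathcal T\}$ contains a club $\mathcal C$ with the following properties: (i) every $A\in\mathcal C$ covers $X$ and is closed under finite intersections; (ii) for any two distinct points $x,y\in X$ there exist $A\in\mathcal C$ and disjoint $U_x,U_y\in A$ with $x\in U_x$ and $y\in U_y$; (iii) $\bigcup\mathcal C=\mathcal T$.
   Context: For a family $\mathcal P$ of open subsets of $X$ contained in a family $\mathcal Q$ of open subsets of $X$, write $\mathcal P\subset_!\mathcal Q$ if for every subfamily $\mathcal S\subset\mathcal P$ and every point $x\notin\operatorname{cl}_X\bigcup\mathcal S$ there exists $W\in\mathcal P$ with $x\in W$ and $W\cap\bigcup\mathcal S=\emptyset$. $[\mathcal Q]^{\le\omega}$ denotes the set of all countable subfamilies of $\mathcal Q$. A family $\mathcal C\subset[\mathcal Q]^{\le\omega}$ is a club if (i) for every increasing sequence $C_1\subset C_2\subset\cdots$ of members of $\mathcal C$, $\bigcup_nC_n\in\mathcal C$, and (ii) every $B\in[\mathcal Q]^{\le\omega}$ is contained in some $C\in\mathcal C$. A space $X$ with topology $\mathcal T_X$ is very I-favorable if the family $\{\mathcal P\in[\mathcal T_X]^{\le\omega}:\mathcal P\subset_!\mathcal T_X\}$ contains a club. *)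

theory Defs
  imports "HOL-Analysis.Analysis"
begin

definition opens :: "'a topology \<Rightarrow> 'a set set" where
  "opens X = {U. openin X U}"

definition subset_bang :: "'a topology \<Rightarrow> 'a set set \<Rightarrow> 'a set set \<Rightarrow> bool" where
  "subset_bang X P Q \<longleftrightarrow> P \<subseteq> Q \<and>
     (\<forall>S. S \<subseteq> P \<longrightarrow> (\<forall>x \<in> topspace X. x \<notin> X closure_of (\<Union>S) \<longrightarrow>
        (\<exists>W\<in>P. x \<in> W \<and> W \<inter> \<Union>S = {})))"

definition countable_subfams :: "'b set \<Rightarrow> 'b set set" where
  "countable_subfams Q = {B. B \<subseteq> Q \<and> countable B}"

definition club :: "'b set \<Rightarrow> 'b set set \<Rightarrow> bool" where
  "club Q C \<longleftrightarrow> C \<subseteq> countable_subfams Q \<and>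
     (\<forall>c :: nat \<Rightarrow> 'b set. (\<forall>n. c n \<in> C) \<and> (\<forall>n. c n \<subseteq> c (Suc n)) \<longrightarrow> (\<Union>n. c n) \<in> C) \<and>
     (\<forall>B \<in> countable_subfams Q. \<exists>A \<in> C. B \<subseteq> A)"

definition very_I_favorable :: "'a topology \<Rightarrow> bool" where
  "very_I_favorable X \<longleftrightarrow>
     (\<exists>C. club (opens X) C \<and>
          C \<subseteq> {P \<in> countable_subfams (opens X). subset_bang X P (opens X)})"

end

theory Submission
  imports Defs
begin

lemma club_Int:
  assumes c1: "club Q C1" and c2: "club Q C2"
  shows "club Q (C1 \<inter> C2)"
proof -
  have s1: "C1 \<subseteq> countable_subfams Q" and s2: "C2 \<subseteq> countable_subfams Q"
    using c1 c2 unfolding club_def by auto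
  have ch1: "\<And>c. (\<forall>n. c n \<in> C1) \<Longrightarrow> (\<forall>n. c n \<subseteq> c (Suc n)) \<Longrightarrow> (\<Union>n. c n) \<in> C1"
    using c1 unfolding club_def by blast
  have ch2: "\<And>c. (\<forall>n. c n \<in> C2) \<Longrightarrow> (\<forall>n. c n \<subseteq> c (Suc n)) \<Longrightarrow> (\<Union>n. c n) \<in> C2"
    using c2 unfolding club_def by blast
  have "\<forall>B\<in>countable_subfams Q. \<exists>A. A \<in> C1 \<and> B \<subseteq> A" using c1 unfolding club_def by blast
  then obtain f where f: "\<And>B. B \<in> countable_subfams Q \<Longrightarrow> f B \<in> C1 \<and> B \<subseteq> f B" by metis
  have "\<forall>B\<in>countable_subfams Q. \<exists>A. A \<in> C2 \<and> B \<subseteq> A" using c2 unfolding club_def by blast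
  then obtain g where g: "\<And>B. B \<in> countable_subfams Q \<Longrightarrow> g B \<in> C2 \<and> B \<subseteq> g B" by metis
  have cof: "\<exists>A \<in> C1 \<inter> C2. B \<subseteq> A" if B: "B \<in> countable_subfams Q" for B
  proof -
    define a where "a = rec_nat (f B) (\<lambda>_ x. f (g x))"
    have a0: "a 0 = f B" and aS: "\<And>n. a (Suc n) = f (g (a n))" by (simp_all add: a_def)
    have aC: "a n \<in> C1" for n
    proof (induction n)
      case 0 then show ?case using f B a0 by simp
    next
      case (Suc n)
      then have "g (a n) \<in> C2" using g s1 by blast
      then show ?case using aS f s2 by auto
    qed
    have gC: "g (a n) \<in> C2 \<and> a n \<subseteq> g (a n)" for n using aC s1 g by blast
    have ga: "g (a n) \<subseteq> a (Suc n)" for n unfolding aS using gC f s2 by blast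
    have m1: "\<forall>n. a n \<subseteq> a (Suc n)" using gC ga by (meson order_trans)
    have m2: "\<forall>n. g (a n) \<subseteq> g (a (Suc n))" using gC ga by (meson order_trans)
    have u1: "(\<Union>n. a n) \<in> C1" using ch1[of a] aC m1 by simp
    have u2: "(\<Union>n. g (a n)) \<in> C2" using ch2[of "\<lambda>n. g (a n)"] gC m2 by simp
    have eq: "(\<Union>n. a n) = (\<Union>n. g (a n))" using gC ga by blast
    have "B \<subseteq> (\<Union>n. a n)" using f B a0 by blast
    then show ?thesis using u1 u2 eq by auto
  qed
  show ?thesis unfolding club_def
  proof (intro conjI allI impI ballI)
    show "C1 \<inter> C2 \<subseteq> countable_subfams Q" using s1 by blast
  next
    fix c :: "nat \<Rightarrow> _" assume "(\<forall>n. c n \<in> C1 \<inter> C2) \<and> (\<forall>n. c n \<subseteq> c (Suc n))"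
    then show "(\<Union>n. c n) \<in> C1 \<inter> C2" using ch1 ch2 by blast
  next
    fix B assume "B \<in> countable_subfams Q" then show "\<exists>A \<in> C1 \<inter> C2. B \<subseteq> A" using cof by blast
  qed
qed

lemma club_D:
  "club (opens X) {A \<in> countable_subfams (opens X). topspace X \<in> A \<and> (\<forall>U\<in>A. \<forall>V\<in>A. U \<inter> V \<in> A)}"
  (is "club _ ?D")
  unfolding club_def
proof (intro conjI allI impI ballI)
  show "?D \<subseteq> countable_subfams (opens X)" by blast
next
  fix c :: "nat \<Rightarrow> _" assume h: "(\<forall>n. c n \<in> ?D) \<and> (\<forall>n. c n \<subseteq> c (Suc n))"
  have mono: "n \<le> m \<Longrightarrow> c n \<subseteq> c m" for n m using h lift_Suc_mono_le[of c] by blast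
  have "countable (\<Union>n. c n)" using h unfolding countable_subfams_def by auto
  moreover have "(\<Union>n. c n) \<subseteq> opens X" using h unfolding countable_subfams_def by auto
  moreover have "topspace X \<in> (\<Union>n. c n)" using h by blast
  moreover have "\<forall>U\<in>(\<Union>n. c n). \<forall>V\<in>(\<Union>n. c n). U \<inter> V \<in> (\<Union>n. c n)"
  proof (intro ballI)
    fix U V assume "U \<in> (\<Union>n. c n)" "V \<in> (\<Union>n. c n)"
    then obtain n m where "U \<in> c n" "V \<in> c m" by blast
    then have "U \<in> c (max n m)" "V \<in> c (max n m)" using mono by (meson max.cobounded1 max.cobounded2 subsetD)+
    then show "U \<inter> V \<in> (\<Union>n. c n)" using h by blast
  qed
  ultimately show "(\<Union>n. c n) \<in> ?D" unfolding countable_subfams_def by blast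
next
  fix B assume B: "B \<in> countable_subfams (opens X)"
  define A where "A = {topspace X \<inter> \<Inter>F | F. finite F \<and> F \<subseteq> B}"
  have "countable {F. finite F \<and> F \<subseteq> B}" using B countable_Collect_finite_subset
    unfolding countable_subfams_def by auto
  then have cA: "countable A" unfolding A_def
    by (simp add: setcompr_eq_image)
  have oA: "A \<subseteq> opens X"
  proof
    fix W assume "W \<in> A"
    then obtain F where F: "finite F" "F \<subseteq> B" "W = topspace X \<inter> \<Inter>F" unfolding A_def by blast
    have "openin X (topspace X \<inter> \<Inter>F)"
    proof (cases "F = {}")
      case True then show ?thesis by simp
    next
      case False
      have "openin X (\<Inter>F)" using F False B
        by (intro openin_Inter) (auto simp: countable_subfams_def opens_def)
      then show ?thesis by (simp add: openin_Int)
    qed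
    then show "W \<in> opens X" using F opens_def by auto
  qed
  have tA: "topspace X \<in> A" unfolding A_def by (rule CollectI, rule exI[of _ "{}"]) auto
  have iA: "\<forall>U\<in>A. \<forall>V\<in>A. U \<inter> V \<in> A"
  proof (intro ballI)
    fix U V assume "U \<in> A" "V \<in> A"
    then obtain F G where "finite F" "F \<subseteq> B" "U = topspace X \<inter> \<Inter>F"
        "finite G" "G \<subseteq> B" "V = topspace X \<inter> \<Inter>G" unfolding A_def by blast
    then show "U \<inter> V \<in> A" unfolding A_def
      by (intro CollectI exI[of _ "F \<union> G"]) auto
  qed
  have bA: "B \<subseteq> A"
  proof
    fix U assume U: "U \<in> B"
    then have "U \<subseteq> topspace X" using B openin_subset unfolding countable_subfams_def opens_def by auto
    then have "U = topspace X \<inter> \<Inter>{U}" by auto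
    then show "U \<in> A" unfolding A_def using U by blast
  qed
  show "\<exists>A\<in>?D. B \<subseteq> A" using cA oA tA iA bA unfolding countable_subfams_def by blast
qed

theorem corollary2p6:
  fixes X :: "'a topology"
  assumes "Hausdorff_space X"
  shows "very_I_favorable X \<longleftrightarrow>
    (\<exists>C. club (opens X) C \<and>
         C \<subseteq> {P \<in> countable_subfams (opens X). subset_bang X P (opens X)} \<and>
         (\<forall>A\<in>C. \<Union>A = topspace X \<and> (\<forall>U\<in>A. \<forall>V\<in>A. U \<inter> V \<in> A)) \<and>
         (\<forall>x\<in>topspace X. \<forall>y\<in>topspace X. x \<noteq> y \<longrightarrow>
            (\<exists>A\<in>C. \<exists>Ux\<in>A. \<exists>Uy\<in>A. Ux \<inter> Uy = {} \<and> x \<in> Ux \<and> y \<in> Uy)) \<and>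
         \<Union>C = opens X)"
proof
  assume "very_I_favorable X"
  then obtain C0 where C0: "club (opens X) C0"
    "C0 \<subseteq> {P \<in> countable_subfams (opens X). subset_bang X P (opens X)}"
    unfolding very_I_favorable_def by blast
  define D where "D = {A \<in> countable_subfams (opens X). topspace X \<in> A \<and> (\<forall>U\<in>A. \<forall>V\<in>A. U \<inter> V \<in> A)}"
  define C where "C = C0 \<inter> D"
  have cl: "club (opens X) C" unfolding C_def D_def by (rule club_Int[OF C0(1) club_D])
  have cof: "\<And>B. B \<in> countable_subfams (opens X) \<Longrightarrow> \<exists>A\<in>C. B \<subseteq> A" using cl unfolding club_def by blast
  have sub: "C \<subseteq> countable_subfams (opens X)" using cl unfolding club_def by (rule conjunct1)
  have p1: "\<forall>A\<in>C. \<Union>A = topspace X \<and> (\<forall>U\<in>A. \<forall>V\<in>A. U \<inter> V \<in> A)"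
  proof
    fix A assume A: "A \<in> C"
    then have AD: "A \<in> D" unfolding C_def by (rule IntD2)
    then have "A \<subseteq> opens X" "topspace X \<in> A" "\<forall>U\<in>A. \<forall>V\<in>A. U \<inter> V \<in> A"
      unfolding D_def countable_subfams_def by simp_all
    moreover have "\<Union>A \<subseteq> topspace X" using calculation(1) openin_subset unfolding opens_def by blast
    ultimately show "\<Union>A = topspace X \<and> (\<forall>U\<in>A. \<forall>V\<in>A. U \<inter> V \<in> A)" by blast
  qed
  have p2: "\<forall>x\<in>topspace X. \<forall>y\<in>topspace X. x \<noteq> y \<longrightarrow>
            (\<exists>A\<in>C. \<exists>Ux\<in>A. \<exists>Uy\<in>A. Ux \<inter> Uy = {} \<and> x \<in> Ux \<and> y \<in> Uy)"
  proof (intro ballI impI)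
    fix x y assume "x \<in> topspace X" "y \<in> topspace X" "x \<noteq> y"
    then obtain U V where UV: "openin X U" "openin X V" "x \<in> U" "y \<in> V" "disjnt U V"
      using assms by (metis Hausdorff_space_def)
    have "{U, V} \<in> countable_subfams (opens X)" using UV unfolding countable_subfams_def opens_def by auto
    then obtain A where "A \<in> C" "{U, V} \<subseteq> A" using cof by blast
    then show "\<exists>A\<in>C. \<exists>Ux\<in>A. \<exists>Uy\<in>A. Ux \<inter> Uy = {} \<and> x \<in> Ux \<and> y \<in> Uy"
      using UV by (auto simp: disjnt_def)
  qed
  have p3: "\<Union>C = opens X"
  proof
    show "\<Union>C \<subseteq> opens X" using sub unfolding countable_subfams_def by blast
    show "opens X \<subseteq> \<Union>C"
    proof
      fix U assume "U \<in> opens X"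
      then have "{U} \<in> countable_subfams (opens X)" unfolding countable_subfams_def by auto
      then show "U \<in> \<Union>C" using cof by blast
    qed
  qed
  have Csub: "C \<subseteq> {P \<in> countable_subfams (opens X). subset_bang X P (opens X)}" using C0(2) C_def by blast
  then show "\<exists>C. club (opens X) C \<and>
         C \<subseteq> {P \<in> countable_subfams (opens X). subset_bang X P (opens X)} \<and>
         (\<forall>A\<in>C. \<Union>A = topspace X \<and> (\<forall>U\<in>A. \<forall>V\<in>A. U \<inter> V \<in> A)) \<and>
         (\<forall>x\<in>topspace X. \<forall>y\<in>topspace X. x \<noteq> y \<longrightarrow>
            (\<exists>A\<in>C. \<exists>Ux\<in>A. \<exists>Uy\<in>A. Ux \<inter> Uy = {} \<and> x \<in> Ux \<and> y \<in> Uy)) \<and>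
         \<Union>C = opens X" by (intro exI[of _ C] conjI cl Csub p1 p2 p3)
next
  assume "\<exists>C. club (opens X) C \<and>
         C \<subseteq> {P \<in> countable_subfams (opens X). subset_bang X P (opens X)} \<and>
         (\<forall>A\<in>C. \<Union>A = topspace X \<and> (\<forall>U\<in>A. \<forall>V\<in>A. U \<inter> V \<in> A)) \<and>
         (\<forall>x\<in>topspace X. \<forall>y\<in>topspace X. x \<noteq> y \<longrightarrow>
            (\<exists>A\<in>C. \<exists>Ux\<in>A. \<exists>Uy\<in>A. Ux \<inter> Uy = {} \<and> x \<in> Ux \<and> y \<in> Uy)) \<and>
         \<Union>C = opens X"
  then obtain C where h1: "club (opens X) C" and
    h2: "C \<subseteq> {P \<in> countable_subfams (opens X). subset_bang X P (opens X)}" by (elim exE conjE)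
  show "very_I_favorable X" unfolding very_I_favorable_def by (intro exI[of _ C] conjI h1 h2)
qed

end
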